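(* Let $\mathbf{E}\subseteq\mathbf{A}$ be finite symmetric integral relation algebras. Then the map $a\mapsto J(a,0)$ is an isomorphism from $\mathbf{A}$ onto a subalgebra $\mathbf{A}'$ of $\mathbf{C}_{\mathbf{E}}(\mathbf{A})$.
   Context: Relation algebras are in the sense of Tarski; $1'$ identity, $0'$ its complement, $;$ relative product; integral: $1'$ is an atom; symmetric: $x^{\smile}=x$; a diversity atom is an atom below $0'$. The algebra $\mathbf{C}_{\mathbf{E}}(\mathbf{A})$: for each atom $x$ of $\mathbf{A}$ let $c(x)$ be the atom of $\mathbf{E}$ with $x\le c(x)$. Let $T(i,j,k)$, for $i,j,k\in\omega$, hold iff $(i\le j=k)$ or $(j\le k=i)$ or $(k\le i=j)$. Let $At=\{1'\}\cup\{x^{(i)}:x$ a diversity atom of $\mathbf{A}$, $i\in\omega\}$ (distinct formal symbols). Let $C\subseteq At^3$ consist of all permutations of $(1',1',1')$, $(1',x^{(i)},x^{(i)})$, and $(x^{(i)},y^{(j)},z^{(k)})$ where $x,y,z$ are diversity atoms of $\mathbf{A}$ with $x;y\ge z$ in $\mathbf{A}$ and, if $c(x)=c(y)=c(z)$, then $T(i,j,k)$. $\mathbf{C}_{\mathbf{E}}(\mathbf{A})$ is the algebra of all subsets of $At$ with set-theoretic Boolean operations, identity $\{1'\}$, converse the identity map, and $X;Y=\{w:\exists u\in X,\exists v\in Y,(u,v,w)\in C\}$ (a complete atomic non-associative relation algebra with atoms the elements of $At$). For $a\in\mathbf{A}$ and $n\in\omega$, $J(a,n)$ is the join of all $x^{(i)}$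 with $x$ a diversity atom of $\mathbf{A}$, $x\le a$, $n\le i\in\omega$, together with $1'$ if $1'\le a$. *)

theory Defs
  imports Main
begin

record 'a ra =
  carrier :: "'a set"
  join    :: "'a \<Rightarrow> 'a \<Rightarrow> 'a"
  meet    :: "'a \<Rightarrow> 'a \<Rightarrow> 'a"
  compl   :: "'a \<Rightarrow> 'a"
  bot     :: 'a
  top     :: 'a
  comp    :: "'a \<Rightarrow> 'a \<Rightarrow> 'a"
  conv    :: "'a \<Rightarrow> 'a"
  ident   :: 'a

definition le :: "'a ra \<Rightarrow> 'a \<Rightarrow> 'a \<Rightarrow> bool" where
  "le A x y \<longleftrightarrow> join A x y = y"

definition is_ra :: "'a ra \<Rightarrow> bool" where
  "is_ra A \<longleftrightarrow>
     bot A \<in> carrier A \<and> top A \<in> carrier A \<and> ident A \<in> carrier A \<and>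
     (\<forall>x\<in>carrier A. compl A x \<in> carrier A \<and> conv A x \<in> carrier A) \<and>
     (\<forall>x\<in>carrier A. \<forall>y\<in>carrier A.
        join A x y \<in> carrier A \<and> meet A x y \<in> carrier A \<and> comp A x y \<in> carrier A) \<and>
     \<comment> \<open>Boolean algebra axioms\<close>
     (\<forall>x\<in>carrier A. \<forall>y\<in>carrier A.
        join A x y = join A y x \<and> meet A x y = meet A y x \<and>
        join A x (meet A x y) = x \<and> meet A x (join A x y) = x) \<and>
     (\<forall>x\<in>carrier A. \<forall>y\<in>carrier A. \<forall>z\<in>carrier A.
        join A (join A x y) z = join A x (join A y z) \<and>
        meet A (meet A x y) z = meet A x (meet A y z) \<and>
        meet A x (join A y z) = join A (meet A x y) (meet A x z)) \<and>
     (\<forall>x\<in>carrier A. join A x (bot A) = x \<and> meet A x (top A) = x \<and>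
        join A x (compl A x) = top A \<and> meet A x (compl A x) = bot A) \<and>
     \<comment> \<open>relation algebra axioms\<close>
     (\<forall>x\<in>carrier A. \<forall>y\<in>carrier A. \<forall>z\<in>carrier A.
        comp A (comp A x y) z = comp A x (comp A y z) \<and>
        comp A (join A x y) z = join A (comp A x z) (comp A y z)) \<and>
     (\<forall>x\<in>carrier A. comp A x (ident A) = x \<and> conv A (conv A x) = x) \<and>
     (\<forall>x\<in>carrier A. \<forall>y\<in>carrier A.
        conv A (join A x y) = join A (conv A x) (conv A y) \<and>
        conv A (comp A x y) = comp A (conv A y) (conv A x) \<and>
        join A (comp A (conv A x) (compl A (comp A x y))) (compl A y) = compl A y)"

definition atom :: "'a ra \<Rightarrow> 'a \<Rightarrow> bool" where
  "atom A x \<longleftrightarrow> x \<in> carrier A \<and> x \<noteq> bot A \<and>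
     (\<forall>y\<in>carrier A. le A y x \<longrightarrow> y = bot A \<or> y = x)"

definition div_atom :: "'a ra \<Rightarrow> 'a \<Rightarrow> bool" where
  "div_atom A x \<longleftrightarrow> atom A x \<and> le A x (compl A (ident A))"

definition integral :: "'a ra \<Rightarrow> bool" where
  "integral A \<longleftrightarrow> atom A (ident A)"

definition symmetric :: "'a ra \<Rightarrow> bool" where
  "symmetric A \<longleftrightarrow> (\<forall>x\<in>carrier A. conv A x = x)"

definition subalg :: "'a ra \<Rightarrow> 'a ra \<Rightarrow> bool" where
  "subalg S B \<longleftrightarrow> carrier S \<subseteq> carrier B \<and>
     bot S = bot B \<and> top S = top B \<and> ident S = ident B \<and>
     bot S \<in> carrier S \<and> top S \<in> carrier S \<and> ident S \<in> carrier S \<and>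
     (\<forall>x\<in>carrier S. compl S x = compl B x \<and> conv S x = conv B x \<and>
        compl S x \<in> carrier S \<and> conv S x \<in> carrier S) \<and>
     (\<forall>x\<in>carrier S. \<forall>y\<in>carrier S.
        join S x y = join B x y \<and> meet S x y = meet B x y \<and> comp S x y = comp B x y \<and>
        join S x y \<in> carrier S \<and> meet S x y \<in> carrier S \<and> comp S x y \<in> carrier S)"

definition ra_hom :: "('a \<Rightarrow> 'b) \<Rightarrow> 'a ra \<Rightarrow> 'b ra \<Rightarrow> bool" where
  "ra_hom f A B \<longleftrightarrow> f ` carrier A \<subseteq> carrier B \<and>
     f (bot A) = bot B \<and> f (top A) = top B \<and> f (ident A) = ident B \<and>
     (\<forall>x\<in>carrier A. f (compl A x) = compl B (f x) \<and> f (conv A x) = conv B (f x)) \<and>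
     (\<forall>x\<in>carrier A. \<forall>y\<in>carrier A.
        f (join A x y) = join B (f x) (f y) \<and> f (meet A x y) = meet B (f x) (f y) \<and>
        f (comp A x y) = comp B (f x) (f y))"

definition ra_iso :: "('a \<Rightarrow> 'b) \<Rightarrow> 'a ra \<Rightarrow> 'b ra \<Rightarrow> bool" where
  "ra_iso f A B \<longleftrightarrow> ra_hom f A B \<and> bij_betw f (carrier A) (carrier B)"

text \<open>Atoms: None stands for 1', Some (x, i) for x^(i).\<close>

definition catom :: "'a ra \<Rightarrow> 'a ra \<Rightarrow> 'a \<Rightarrow> 'a" where
  "catom E A x = (THE e. atom E e \<and> le A x e)"

definition T :: "nat \<Rightarrow> nat \<Rightarrow> nat \<Rightarrow> bool" where
  "T i j k \<longleftrightarrow> (i \<le> j \<and> j = k) \<or> (j \<le> k \<and> k = i) \<or> (k \<le> i \<and> i = j)"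

definition At :: "'a ra \<Rightarrow> ('a \<times> nat) option set" where
  "At A = {None} \<union> {Some (x, i) | x i. div_atom A x}"

fun base_triple :: "'a ra \<Rightarrow> 'a ra \<Rightarrow> ('a \<times> nat) option \<Rightarrow> ('a \<times> nat) option
    \<Rightarrow> ('a \<times> nat) option \<Rightarrow> bool" where
  "base_triple E A None None None = True"
| "base_triple E A None (Some p) (Some q) = (p = q)"
| "base_triple E A (Some (x, i)) (Some (y, j)) (Some (z, k)) =
     (div_atom A x \<and> div_atom A y \<and> div_atom A z \<and> le A z (comp A x y) \<and>
      (catom E A x = catom E A y \<and> catom E A y = catom E A z \<longrightarrow> T i j k))"
| "base_triple E A _ _ _ = False"

definition Ctr :: "'a ra \<Rightarrow> 'a ra \<Rightarrow> ('a \<times> nat) option \<Rightarrow> ('a \<times> nat) option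
    \<Rightarrow> ('a \<times> nat) option \<Rightarrow> bool" where
  "Ctr E A u v w \<longleftrightarrow> u \<in> At A \<and> v \<in> At A \<and> w \<in> At A \<and>
     (base_triple E A u v w \<or> base_triple E A u w v \<or> base_triple E A v u w \<or>
      base_triple E A v w u \<or> base_triple E A w u v \<or> base_triple E A w v u)"

definition CEA :: "'a ra \<Rightarrow> 'a ra \<Rightarrow> ('a \<times> nat) option set ra" where
  "CEA E A = \<lparr> carrier = Pow (At A), join = (\<union>), meet = (\<inter>),
     compl = (\<lambda>X. At A - X), bot = {}, top = At A,
     comp = (\<lambda>X Y. {w. \<exists>u\<in>X. \<exists>v\<in>Y. Ctr E A u v w}),
     conv = (\<lambda>X. X), ident = {None} \<rparr>"

definition J :: "'a ra \<Rightarrow> 'a \<Rightarrow> nat \<Rightarrow> ('a \<times> nat) option set" where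
  "J A a n = {Some (x, i) | x i. div_atom A x \<and> le A x a \<and> n \<le> i}
             \<union> (if le A (ident A) a then {None} else {})"

end

theory Submission imports Defs begin

locale sra = fixes A :: "'a ra"
  assumes ra: "is_ra A" and fin: "finite (carrier A)" and sym: "symmetric A" and integ: "integral A"
begin

lemma cl_bot: "bot A \<in> carrier A" and cl_top: "top A \<in> carrier A" and cl_id: "ident A \<in> carrier A"
  using ra unfolding is_ra_def by auto
lemma cl1: "x \<in> carrier A \<Longrightarrow> compl A x \<in> carrier A"
  using ra unfolding is_ra_def by auto
lemma cl2: "x \<in> carrier A \<Longrightarrow> y \<in> carrier A \<Longrightarrow> join A x y \<in> carrier A \<and> meet A x y \<in> carrier A \<and> comp A x y \<in> carrier A"
  using ra unfolding is_ra_def by auto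
lemmas cl = cl_bot cl_top cl_id cl1 cl2

lemma jc: "x \<in> carrier A \<Longrightarrow> y \<in> carrier A \<Longrightarrow> join A x y = join A y x"
  and mc: "x \<in> carrier A \<Longrightarrow> y \<in> carrier A \<Longrightarrow> meet A x y = meet A y x"
  and ab1: "x \<in> carrier A \<Longrightarrow> y \<in> carrier A \<Longrightarrow> join A x (meet A x y) = x"
  and ab2: "x \<in> carrier A \<Longrightarrow> y \<in> carrier A \<Longrightarrow> meet A x (join A x y) = x"
  using ra unfolding is_ra_def by auto
lemma ja: "x \<in> carrier A \<Longrightarrow> y \<in> carrier A \<Longrightarrow> z \<in> carrier A \<Longrightarrow> join A (join A x y) z = join A x (join A y z)"
  and ma: "x \<in> carrier A \<Longrightarrow> y \<in> carrier A \<Longrightarrow> z \<in> carrier A \<Longrightarrow> meet A (meet A x y) z = meet A x (meet A y z)"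
  and distr: "x \<in> carrier A \<Longrightarrow> y \<in> carrier A \<Longrightarrow> z \<in> carrier A \<Longrightarrow> meet A x (join A y z) = join A (meet A x y) (meet A x z)"
  and cdistr: "x \<in> carrier A \<Longrightarrow> y \<in> carrier A \<Longrightarrow> z \<in> carrier A \<Longrightarrow> comp A (join A x y) z = join A (comp A x z) (comp A y z)"
  using ra unfolding is_ra_def by auto
lemma jbot: "x \<in> carrier A \<Longrightarrow> join A x (bot A) = x"
  and mtop: "x \<in> carrier A \<Longrightarrow> meet A x (top A) = x"
  and jcompl: "x \<in> carrier A \<Longrightarrow> join A x (compl A x) = top A"
  and mcompl: "x \<in> carrier A \<Longrightarrow> meet A x (compl A x) = bot A"
  and cid: "x \<in> carrier A \<Longrightarrow> comp A x (ident A) = x"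
  using ra unfolding is_ra_def by auto
lemma conv_id: "x \<in> carrier A \<Longrightarrow> conv A x = x" using sym unfolding symmetric_def by auto
lemma conv_comp: "x \<in> carrier A \<Longrightarrow> y \<in> carrier A \<Longrightarrow> conv A (comp A x y) = comp A (conv A y) (conv A x)"
  and schr: "x \<in> carrier A \<Longrightarrow> y \<in> carrier A \<Longrightarrow> join A (comp A (conv A x) (compl A (comp A x y))) (compl A y) = compl A y"
  using ra unfolding is_ra_def by auto

lemma ccomm: "x \<in> carrier A \<Longrightarrow> y \<in> carrier A \<Longrightarrow> comp A x y = comp A y x"
proof -
  assume c: "x \<in> carrier A" "y \<in> carrier A"
  have "comp A x y = conv A (comp A x y)" using c cl2 conv_id by simp
  also have "\<dots> = comp A (conv A y) (conv A x)" using conv_comp c by simp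
  also have "\<dots> = comp A y x" using c conv_id by simp
  finally show ?thesis .
qed

lemma jidem: "x \<in> carrier A \<Longrightarrow> join A x x = x"
proof -
  assume x: "x \<in> carrier A"
  have "meet A x (join A x x) = x" using ab2[of x x] x by simp
  hence "join A x x = join A x (meet A x (join A x x))" by simp
  also have "\<dots> = x" using ab1[of x "join A x x"] x cl2 by simp
  finally show ?thesis .
qed
lemma midem: "x \<in> carrier A \<Longrightarrow> meet A x x = x"
proof -
  assume x: "x \<in> carrier A"
  have "join A x (meet A x x) = x" using ab1[of x x] x by simp
  hence "meet A x x = meet A x (join A x (meet A x x))" by simp
  also have "\<dots> = x" using ab2[of x "meet A x x"] x cl2 by simp
  finally show ?thesis .
qed

lemma le_meet: "x \<in> carrier A \<Longrightarrow> y \<in> carrier A \<Longrightarrow> le A x y \<longleftrightarrow> meet A x y = x"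
proof -
  assume c: "x \<in> carrier A" "y \<in> carrier A"
  show ?thesis unfolding le_def
  proof
    assume "join A x y = y" then show "meet A x y = x" using ab2[OF c] by simp
  next
    assume h: "meet A x y = x"
    have "join A y (meet A y x) = y" using ab1 c by simp
    then show "join A x y = y" using h c jc mc by simp
  qed
qed
lemma le_refl: "x \<in> carrier A \<Longrightarrow> le A x x" unfolding le_def by (simp add: jidem)
lemma le_trans: "x \<in> carrier A \<Longrightarrow> y \<in> carrier A \<Longrightarrow> z \<in> carrier A \<Longrightarrow> le A x y \<Longrightarrow> le A y z \<Longrightarrow> le A x z"
  unfolding le_def using ja[of x y z] by simp
lemma le_antisym: "x \<in> carrier A \<Longrightarrow> y \<in> carrier A \<Longrightarrow> le A x y \<Longrightarrow> le A y x \<Longrightarrow> x = y"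
  unfolding le_def using jc[of x y] by simp
lemma meet_le1: "x \<in> carrier A \<Longrightarrow> y \<in> carrier A \<Longrightarrow> le A (meet A x y) x"
proof -
  assume c: "x \<in> carrier A" "y \<in> carrier A"
  have "meet A (meet A x y) x = meet A x (meet A x y)" using c cl2 mc by simp
  also have "\<dots> = meet A (meet A x x) y" using c ma by simp
  also have "\<dots> = meet A x y" using c midem by simp
  finally show ?thesis using c cl2 le_meet by simp
qed
lemma meet_le2: "x \<in> carrier A \<Longrightarrow> y \<in> carrier A \<Longrightarrow> le A (meet A x y) y"
  using meet_le1[of y x] mc[of x y] by simp
lemma meet_glb: "x \<in> carrier A \<Longrightarrow> y \<in> carrier A \<Longrightarrow> z \<in> carrier A \<Longrightarrow> le A z x \<Longrightarrow> le A z y \<Longrightarrow> le A z (meet A x y)"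
proof -
  assume c: "x \<in> carrier A" "y \<in> carrier A" "z \<in> carrier A" and l: "le A z x" "le A z y"
  have "meet A z (meet A x y) = meet A (meet A z x) y" using c ma by simp
  also have "\<dots> = z" using l c le_meet by simp
  finally show ?thesis using c cl2 le_meet by simp
qed
lemma bot_le: "x \<in> carrier A \<Longrightarrow> le A (bot A) x"
  unfolding le_def using jbot[of x] jc[of x "bot A"] cl_bot by simp
lemma le_bot: "x \<in> carrier A \<Longrightarrow> le A x (bot A) \<Longrightarrow> x = bot A"
  using bot_le[of x] cl_bot le_antisym by blast
lemma le_top: "x \<in> carrier A \<Longrightarrow> le A x (top A)"
  by (simp add: le_meet cl_top mtop)
lemma compl_le: "x \<in> carrier A \<Longrightarrow> y \<in> carrier A \<Longrightarrow> meet A x y = bot A \<Longrightarrow> le A x (compl A y)"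
proof -
  assume a: "x \<in> carrier A" "y \<in> carrier A" "meet A x y = bot A"
  have "x = meet A x (join A y (compl A y))" using a by (simp add: jcompl mtop)
  also have "\<dots> = meet A x (compl A y)" using a by (simp add: distr cl1 jc[OF cl_bot] jbot cl2)
  finally show ?thesis using a by (simp add: le_meet cl1)
qed
lemma le_compl_bot: "x \<in> carrier A \<Longrightarrow> y \<in> carrier A \<Longrightarrow> le A x y \<Longrightarrow> le A x (compl A y) \<Longrightarrow> x = bot A"
  using meet_glb[of y "compl A y" x] cl1[of y] mcompl[of y] le_bot by simp
lemma mono_comp: "x \<in> carrier A \<Longrightarrow> y \<in> carrier A \<Longrightarrow> z \<in> carrier A \<Longrightarrow> le A x y \<Longrightarrow> le A (comp A x z) (comp A y z)"
  unfolding le_def using cdistr[of x y z] by simp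
lemma mono_comp2: "x \<in> carrier A \<Longrightarrow> y \<in> carrier A \<Longrightarrow> z \<in> carrier A \<Longrightarrow> le A x y \<Longrightarrow> le A (comp A z x) (comp A z y)"
  using mono_comp[of x y z] ccomm[of x z] ccomm[of y z] by simp
lemma le_nz: "x \<in> carrier A \<Longrightarrow> y \<in> carrier A \<Longrightarrow> le A x y \<Longrightarrow> x \<noteq> bot A \<Longrightarrow> y \<noteq> bot A"
  using le_bot by blast

lemma atom_split: "atom A x \<Longrightarrow> a \<in> carrier A \<Longrightarrow> le A x a \<or> le A x (compl A a)"
proof -
  assume x: "atom A x" and a: "a \<in> carrier A"
  have xc: "x \<in> carrier A" using x unfolding atom_def by auto
  have "meet A x a \<in> carrier A" "le A (meet A x a) x" using cl2 meet_le1 xc a by auto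
  then have "meet A x a = bot A \<or> meet A x a = x" using x unfolding atom_def by blast
  then show ?thesis using compl_le[OF xc a] le_meet[OF xc a] by blast
qed
lemma atom_join: "atom A x \<Longrightarrow> a \<in> carrier A \<Longrightarrow> b \<in> carrier A \<Longrightarrow> le A x (join A a b) \<Longrightarrow> le A x a \<or> le A x b"
proof -
  assume x: "atom A x" and ab: "a \<in> carrier A" "b \<in> carrier A" and l: "le A x (join A a b)"
  have xc: "x \<in> carrier A" using x unfolding atom_def by auto
  show ?thesis
  proof (cases "le A x a")
    case False
    then have xa: "le A x (compl A a)" using atom_split[OF x ab(1)] by auto
    have m: "meet A x a \<in> carrier A" using cl2 xc ab by auto
    have "le A (meet A x a) (compl A a)" using le_trans[OF m xc cl1[OF ab(1)]] meet_le1[OF xc ab(1)] xa by blast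
    then have "meet A x a = bot A" using le_compl_bot[OF m ab(1)] meet_le2[OF xc ab(1)] by blast
    moreover have "x = meet A x (join A a b)" using l xc ab by (simp add: le_meet cl2)
    ultimately have "x = join A (bot A) (meet A x b)" using ab xc distr by simp
    also have "\<dots> = meet A x b" using jc[OF cl_bot, of "meet A x b"] jbot[of "meet A x b"] cl2 ab xc by simp
    finally have "x = meet A x b" .
    then show ?thesis using ab xc by (simp add: le_meet)
  qed simp
qed
lemma atom_meet: "atom A z \<Longrightarrow> w \<in> carrier A \<Longrightarrow> meet A w z \<noteq> bot A \<longleftrightarrow> le A z w"
proof -
  assume z: "atom A z" and w: "w \<in> carrier A"
  have zc: "z \<in> carrier A" using z unfolding atom_def by auto
  have "meet A w z \<in> carrier A" "le A (meet A w z) z" using cl2 meet_le2 zc w by auto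
  then have d: "meet A w z = bot A \<or> meet A w z = z" using z unfolding atom_def by blast
  have "meet A w z = meet A z w" using mc w zc by simp
  then show ?thesis using d le_meet[OF zc w] z unfolding atom_def by auto
qed

lemma exists_atom: "x \<in> carrier A \<Longrightarrow> x \<noteq> bot A \<Longrightarrow> \<exists>t. atom A t \<and> le A t x"
proof -
  assume x: "x \<in> carrier A" "x \<noteq> bot A"
  define P where "P y \<longleftrightarrow> y \<in> carrier A \<and> le A y x \<and> y \<noteq> bot A" for y
  define m where "m y = card {z \<in> carrier A. le A z y}" for y
  have "P x" using x le_refl P_def by auto
  then obtain t where t: "P t" and tm: "\<And>y. P y \<Longrightarrow> m t \<le> m y"
    using ex_has_least_nat[of P x m] by blast
  have "atom A t" unfolding atom_def
  proof (intro conjI ballI impI)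
    show "t \<in> carrier A" "t \<noteq> bot A" using t P_def by auto
    fix y assume y: "y \<in> carrier A" "le A y t"
    show "y = bot A \<or> y = t"
    proof (rule ccontr)
      assume "\<not> (y = bot A \<or> y = t)"
      then have yn: "y \<noteq> bot A" "y \<noteq> t" by auto
      have "P y" using y yn t P_def le_trans x by blast
      have sub: "{z \<in> carrier A. le A z y} \<subset> {z \<in> carrier A. le A z t}"
      proof
        show "{z \<in> carrier A. le A z y} \<subseteq> {z \<in> carrier A. le A z t}"
          using y t P_def le_trans by blast
        have "t \<notin> {z \<in> carrier A. le A z y}" using le_antisym y yn t P_def by blast
        moreover have "t \<in> {z \<in> carrier A. le A z t}" using t P_def le_refl by auto
        ultimately show "{z \<in> carrier A. le A z y} \<noteq> {z \<in> carrier A. le A z t}" by blast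
      qed
      have "m y < m t" unfolding m_def
        by (rule psubset_card_mono[OF _ sub]) (use fin in auto)
      with tm[OF \<open>P y\<close>] show False by simp
    qed
  qed
  then show ?thesis using t P_def by auto
qed

definition N where "N x y z \<longleftrightarrow> meet A (comp A x y) z \<noteq> bot A"

lemma N12: "x \<in> carrier A \<Longrightarrow> y \<in> carrier A \<Longrightarrow> N x y z \<Longrightarrow> N y x z"
  unfolding N_def by (simp add: ccomm)

lemma N_aux: "x \<in> carrier A \<Longrightarrow> y \<in> carrier A \<Longrightarrow> z \<in> carrier A \<Longrightarrow> meet A (comp A x y) z = bot A \<Longrightarrow> meet A (comp A x z) y = bot A"
proof -
  assume c: "x \<in> carrier A" "y \<in> carrier A" "z \<in> carrier A" and m: "meet A (comp A x y) z = bot A"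
  have xy: "comp A x y \<in> carrier A" "comp A x z \<in> carrier A" using c cl2 by auto
  have "meet A z (comp A x y) = bot A" using m mc[OF xy(1) c(3)] by simp
  then have "le A z (compl A (comp A x y))" using compl_le[OF c(3) xy(1)] by simp
  then have "le A (comp A x z) (comp A x (compl A (comp A x y)))" using c by (simp add: mono_comp2 cl1 cl2)
  moreover have "le A (comp A x (compl A (comp A x y))) (compl A y)"
    using schr[OF c(1,2)] c by (simp add: le_def conv_id)
  moreover have "comp A x (compl A (comp A x y)) \<in> carrier A" using c cl1 cl2 by auto
  ultimately have l: "le A (comp A x z) (compl A y)" using le_trans[OF xy(2) _ cl1[OF c(2)]] by blast
  have mm: "meet A (comp A x z) y \<in> carrier A" using xy c cl2 by auto
  have "le A (meet A (comp A x z) y) (compl A y)" using le_trans[OF mm xy(2) cl1[OF c(2)]] meet_le1[OF xy(2) c(2)] l by blast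
  then show ?thesis using le_compl_bot[OF mm c(2)] meet_le2[OF xy(2) c(2)] by blast
qed
lemma N23: "x \<in> carrier A \<Longrightarrow> y \<in> carrier A \<Longrightarrow> z \<in> carrier A \<Longrightarrow> N x y z \<Longrightarrow> N x z y"
  unfolding N_def using N_aux by blast
lemma N_mono: "x \<in> carrier A \<Longrightarrow> y \<in> carrier A \<Longrightarrow> z \<in> carrier A \<Longrightarrow> a \<in> carrier A \<Longrightarrow> b \<in> carrier A \<Longrightarrow>
   le A x a \<Longrightarrow> le A y b \<Longrightarrow> N x y z \<Longrightarrow> N a b z"
proof -
  assume c: "x \<in> carrier A" "y \<in> carrier A" "z \<in> carrier A" "a \<in> carrier A" "b \<in> carrier A"
    and l: "le A x a" "le A y b" and n: "N x y z"
  have "le A (comp A x y) (comp A a y)" using c l by (simp add: mono_comp)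
  moreover have "le A (comp A a y) (comp A a b)" using c l by (simp add: mono_comp2)
  ultimately have l: "le A (comp A x y) (comp A a b)" using c le_trans cl2 by metis
  have cc: "comp A x y \<in> carrier A" "comp A a b \<in> carrier A" "meet A (comp A x y) z \<in> carrier A"
     "meet A (comp A a b) z \<in> carrier A" using c cl2 by auto
  have "le A (meet A (comp A x y) z) (comp A a b)"
    using le_trans[OF cc(3) cc(1) cc(2)] meet_le1[OF cc(1) c(3)] l by blast
  then have "le A (meet A (comp A x y) z) (meet A (comp A a b) z)"
    using meet_glb[OF cc(2) c(3) cc(3)] meet_le2[OF cc(1) c(3)] by blast
  then show ?thesis using n le_nz[OF cc(3) cc(4)] unfolding N_def by blast
qed
lemma N_atom: "atom A z \<Longrightarrow> x \<in> carrier A \<Longrightarrow> y \<in> carrier A \<Longrightarrow> N x y z \<longleftrightarrow> le A z (comp A x y)"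
  unfolding N_def using atom_meet cl2 by blast
lemma N_extract: "x \<in> carrier A \<Longrightarrow> y \<in> carrier A \<Longrightarrow> a \<in> carrier A \<Longrightarrow> N x y a \<Longrightarrow> \<exists>t. atom A t \<and> le A t a \<and> N x y t"
proof -
  assume c: "x \<in> carrier A" "y \<in> carrier A" "a \<in> carrier A" and n: "N x y a"
  obtain t where t: "atom A t" "le A t (meet A (comp A x y) a)"
    using exists_atom[of "meet A (comp A x y) a"] n c cl2 unfolding N_def by blast
  have tc: "t \<in> carrier A" using t unfolding atom_def by auto
  have cc: "comp A x y \<in> carrier A" "meet A (comp A x y) a \<in> carrier A" using c cl2 by auto
  have "le A t a" using t le_trans[OF tc cc(2) c(3)] meet_le2[OF cc(1) c(3)] by blast
  moreover have "le A t (comp A x y)" using t le_trans[OF tc cc(2) cc(1)] meet_le1[OF cc(1) c(3)] by blast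
  ultimately show ?thesis using t N_atom c by blast
qed

lemma atom_cases: "atom A x \<Longrightarrow> x = ident A \<or> div_atom A x"
proof -
  assume x: "atom A x"
  have xc: "x \<in> carrier A" using x unfolding atom_def by auto
  have "le A x (ident A) \<or> le A x (compl A (ident A))" using atom_split[OF x cl_id] .
  moreover have "le A x (ident A) \<Longrightarrow> x = ident A"
    using integ x xc unfolding integral_def atom_def by blast
  ultimately show ?thesis using x unfolding div_atom_def by blast
qed
lemma id_not_div: "\<not> div_atom A (ident A)"
  unfolding div_atom_def using integ le_compl_bot[OF cl_id cl_id] le_refl[OF cl_id] unfolding integral_def atom_def by blast
lemma div_atom_atom: "div_atom A x \<Longrightarrow> atom A x" unfolding div_atom_def by auto
lemma atom_c: "atom A x \<Longrightarrow> x \<in> carrier A" unfolding atom_def by auto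
lemma id_atom: "atom A (ident A)" using integ integral_def by auto
lemma atom_eq: "atom A x \<Longrightarrow> atom A y \<Longrightarrow> le A x y \<Longrightarrow> x = y"
  unfolding atom_def by auto


lemma le_of_meet_compl: "x \<in> carrier A \<Longrightarrow> y \<in> carrier A \<Longrightarrow> meet A x (compl A y) = bot A \<Longrightarrow> le A x y"
proof -
  assume c: "x \<in> carrier A" "y \<in> carrier A" and m: "meet A x (compl A y) = bot A"
  have "x = meet A x (join A y (compl A y))" using c by (simp add: jcompl mtop)
  also have "\<dots> = join A (meet A x y) (bot A)" using c m by (simp add: distr cl1)
  also have "\<dots> = meet A x y" using c cl2 jbot by simp
  finally show ?thesis using c le_meet by simp
qed
lemma join_ub1: "x \<in> carrier A \<Longrightarrow> y \<in> carrier A \<Longrightarrow> le A x (join A x y)"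
  unfolding le_def using ja[of x x y] jidem[of x] by simp
lemma join_ub2: "x \<in> carrier A \<Longrightarrow> y \<in> carrier A \<Longrightarrow> le A y (join A x y)"
  using join_ub1[of y x] jc[of x y] by simp

lemma atom_compl: "atom A t \<Longrightarrow> a \<in> carrier A \<Longrightarrow> le A t (compl A a) \<longleftrightarrow> \<not> le A t a"
  using atom_split[of t a] le_compl_bot[of t a] atom_c[of t] unfolding atom_def by blast
lemma atom_join_iff: "atom A t \<Longrightarrow> a \<in> carrier A \<Longrightarrow> b \<in> carrier A \<Longrightarrow> le A t (join A a b) \<longleftrightarrow> le A t a \<or> le A t b"
  using atom_join[of t a b] atom_c[of t] le_trans[of t a "join A a b"] le_trans[of t b "join A a b"]
    join_ub1[of a b] join_ub2[of a b] cl2[of a b] by blast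
lemma atom_meet_iff: "atom A t \<Longrightarrow> a \<in> carrier A \<Longrightarrow> b \<in> carrier A \<Longrightarrow> le A t (meet A a b) \<longleftrightarrow> le A t a \<and> le A t b"
  using meet_glb[of a b t] atom_c[of t] le_trans[of t "meet A a b" a] le_trans[of t "meet A a b" b]
    meet_le1[of a b] meet_le2[of a b] cl2[of a b] by blast
lemma atom_bot: "atom A t \<Longrightarrow> \<not> le A t (bot A)"
  using le_bot atom_c unfolding atom_def by blast

definition val :: "('a \<times> nat) option \<Rightarrow> 'a" where
  "val w = (case w of None \<Rightarrow> ident A | Some p \<Rightarrow> fst p)"

lemma At_Some: "Some (x, i) \<in> At A \<longleftrightarrow> div_atom A x" by (auto simp: At_def)
lemma At_None: "None \<in> At A" by (auto simp: At_def)
lemma J_iff: "w \<in> J A a 0 \<longleftrightarrow> w \<in> At A \<and> le A (val w) a"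
  by (cases w) (auto simp: J_def At_def val_def)
lemma val_atom: "w \<in> At A \<Longrightarrow> atom A (val w)"
  by (auto simp: At_def val_def id_atom div_atom_atom)
lemma J_sub: "J A a 0 \<subseteq> At A" using J_iff by blast

lemma N_perm: "x \<in> carrier A \<Longrightarrow> y \<in> carrier A \<Longrightarrow> z \<in> carrier A \<Longrightarrow> N x y z \<Longrightarrow>
   N y x z \<and> N x z y \<and> N z x y \<and> N y z x \<and> N z y x"
  using N12 N23 by meson

lemma N_iii: "N (ident A) (ident A) (ident A)"
  unfolding N_def using cid[OF cl_id] midem[OF cl_id] id_atom unfolding atom_def by simp
lemma N_ixx: "atom A x \<Longrightarrow> N (ident A) x x"
  unfolding N_def using ccomm[OF cl_id] cid midem atom_c unfolding atom_def by auto
lemma N_xix: "atom A x \<Longrightarrow> N x (ident A) x"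
  unfolding N_def using cid midem atom_c unfolding atom_def by auto

lemma bt_N: "u \<in> At A \<Longrightarrow> v \<in> At A \<Longrightarrow> w \<in> At A \<Longrightarrow> base_triple E A u v w \<Longrightarrow> N (val u) (val v) (val w)"
proof -
  assume a: "u \<in> At A" "v \<in> At A" "w \<in> At A" "base_triple E A u v w"
  have o: "t = None \<or> (\<exists>x i. t = Some (x, i))" for t :: "('a \<times> nat) option" by (cases t) auto
  show ?thesis using o[of u] o[of v] o[of w] a
    by (elim disjE exE) (auto simp: val_def N_iii N_ixx At_Some div_atom_atom N_atom atom_c)
qed

lemma Ctr_N: "Ctr E A u v w \<Longrightarrow> N (val u) (val v) (val w)"
proof -
  assume c: "Ctr E A u v w"
  then have at: "u \<in> At A" "v \<in> At A" "w \<in> At A" unfolding Ctr_def by auto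
  then have cc: "val u \<in> carrier A" "val v \<in> carrier A" "val w \<in> carrier A" using val_atom atom_c by auto
  show ?thesis using c at unfolding Ctr_def
    using bt_N[of u v w E] bt_N[of u w v E] bt_N[of v u w E] bt_N[of v w u E] bt_N[of w u v E] bt_N[of w v u E]
      N_perm[OF cc(1) cc(2) cc(3)] N_perm[OF cc(1) cc(3) cc(2)] N_perm[OF cc(2) cc(1) cc(3)]
      N_perm[OF cc(2) cc(3) cc(1)] N_perm[OF cc(3) cc(1) cc(2)] N_perm[OF cc(3) cc(2) cc(1)]
    by blast
qed

lemma J_comp: "a \<in> carrier A \<Longrightarrow> b \<in> carrier A \<Longrightarrow>
  J A (comp A a b) 0 = {w. \<exists>u\<in>J A a 0. \<exists>v\<in>J A b 0. Ctr E A u v w}"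
proof (rule set_eqI, rule iffI)
  fix w assume ab: "a \<in> carrier A" "b \<in> carrier A" and "w \<in> {w. \<exists>u\<in>J A a 0. \<exists>v\<in>J A b 0. Ctr E A u v w}"
  then obtain u v where uv: "u \<in> J A a 0" "v \<in> J A b 0" "Ctr E A u v w" by blast
  have at: "u \<in> At A" "v \<in> At A" "w \<in> At A" using uv unfolding Ctr_def by auto
  then have cc: "val u \<in> carrier A" "val v \<in> carrier A" "val w \<in> carrier A" using val_atom atom_c by auto
  have "N a b (val w)" using N_mono[OF cc ab] uv J_iff Ctr_N by blast
  then show "w \<in> J A (comp A a b) 0" using N_atom[OF val_atom[OF at(3)] ab] J_iff at by blast
next
  fix w assume ab: "a \<in> carrier A" "b \<in> carrier A" and w: "w \<in> J A (comp A a b) 0"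
  have wA: "w \<in> At A" and wl: "le A (val w) (comp A a b)" using w J_iff by auto
  define z where "z = val w"
  have za: "atom A z" using val_atom wA z_def by simp
  have zc: "z \<in> carrier A" using za atom_c by simp
  have "N a b z" using N_atom[OF za ab] wl z_def by simp
  then have "N z b a" using N_perm[OF ab zc] by blast
  then obtain x where x: "atom A x" "le A x a" "N z b x" using N_extract[OF zc ab(2) ab(1)] by blast
  have xc: "x \<in> carrier A" using x atom_c by simp
  have "N z x b" using N_perm[OF zc ab(2) xc] x by blast
  then obtain y where y: "atom A y" "le A y b" "N z x y" using N_extract[OF zc xc ab(2)] by blast
  have yc: "y \<in> carrier A" using y atom_c by simp
  have nxyz: "N x y z" using N_perm[OF zc xc yc] y by blast
  define atJ where "atJ t k = (if t = ident A then None else Some (t, k))" for t and k :: nat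
  have atJ: "atom A t \<Longrightarrow> atJ t k \<in> At A \<and> val (atJ t k) = t" for t k
    using atom_cases[of t] unfolding atJ_def At_def val_def by auto
  have id_div: "t = ident A \<or> div_atom A t" if "atom A t" for t using atom_cases that by blast
  have ux: "atJ x k \<in> J A a 0" for k using atJ[OF x(1)] x J_iff by simp
  have vy: "atJ y k \<in> J A b 0" for k using atJ[OF y(1)] y J_iff by simp
  show "w \<in> {w. \<exists>u\<in>J A a 0. \<exists>v\<in>J A b 0. Ctr E A u v w}"
  proof (cases w)
    case None
    then have z1: "z = ident A" using z_def val_def by simp
    have "N x (ident A) y" using N_perm[OF xc yc cl_id] nxyz z1 by blast
    then have "meet A x y \<noteq> bot A" unfolding N_def using cid xc by simp
    then have "le A y x" using atom_meet[OF y(1) xc] by simp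
    then have yx: "y = x" using atom_eq[OF y(1) x(1)] by simp
    have "Ctr E A (atJ x 0) (atJ x 0) w"
      using id_div[OF x(1)] atJ[OF x(1), of 0] None unfolding Ctr_def atJ_def At_def by auto
    then show ?thesis using ux vy yx by blast
  next
    case (Some p)
    then obtain zz k where p: "w = Some (zz, k)" by (cases p) auto
    then have zz: "zz = z" "div_atom A z" using z_def wA At_Some by (auto simp: val_def)
    show ?thesis
    proof (cases "x = ident A")
      case True
      then have "meet A y z \<noteq> bot A" using nxyz unfolding N_def using ccomm[OF cl_id yc] cid[OF yc] by simp
      then have "z = y" using atom_meet[OF za yc] atom_eq[OF za y(1)] by simp
      moreover have "Ctr E A None (Some (z, k)) w"
        using p zz unfolding Ctr_def At_def by auto
      moreover have "atJ x 0 = None" using True atJ_def by simp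
      moreover have "atJ y k = Some (z, k)" using \<open>z = y\<close> zz id_not_div atJ_def by auto
      ultimately show ?thesis using ux[of 0] vy[of k] by force
    next
      case xn: False
      show ?thesis
      proof (cases "y = ident A")
        case True
        then have "meet A x z \<noteq> bot A" using nxyz unfolding N_def using cid[OF xc] by simp
        then have "z = x" using atom_meet[OF za xc] atom_eq[OF za x(1)] by simp
        moreover have "Ctr E A (Some (z, k)) None w"
          using p zz unfolding Ctr_def At_def by auto
        moreover have "atJ y 0 = None" using True atJ_def by simp
        moreover have "atJ x k = Some (z, k)" using \<open>z = x\<close> zz id_not_div atJ_def by auto
        ultimately show ?thesis using ux[of k] vy[of 0] by force
      next
        case yn: False
        have dx: "div_atom A x" "div_atom A y" using id_div x(1) y(1) xn yn by auto
        have "le A z (comp A x y)" using N_atom[OF za xc yc] nxyz by simp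
        then have "base_triple E A (Some (x, k)) (Some (y, k)) w"
          using p zz dx by (simp add: T_def)
        then have "Ctr E A (Some (x, k)) (Some (y, k)) w"
          using p zz dx At_Some unfolding Ctr_def by blast
        moreover have "atJ x k = Some (x, k)" "atJ y k = Some (y, k)" using xn yn atJ_def by auto
        ultimately show ?thesis using ux[of k] vy[of k] by force
      qed
    qed
  qed
qed


lemma J_bot: "J A (bot A) 0 = {}"
  using J_iff val_atom atom_bot by blast
lemma J_top: "J A (top A) 0 = At A"
  using J_iff val_atom atom_c le_top by blast
lemma J_id: "J A (ident A) 0 = {None}"
proof (rule set_eqI)
  fix w show "w \<in> J A (ident A) 0 \<longleftrightarrow> w \<in> {None}"
  proof (cases w)
    case None then show ?thesis using J_iff At_None le_refl[OF cl_id] by (simp add: val_def)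
  next
    case (Some p)
    then obtain x i where p: "w = Some (x, i)" by (cases p) auto
    have "\<not> (div_atom A x \<and> le A x (ident A))"
      using atom_eq[OF div_atom_atom id_atom] id_not_div by blast
    then show ?thesis using J_iff p At_Some by (simp add: val_def)
  qed
qed
lemma J_compl: "a \<in> carrier A \<Longrightarrow> J A (compl A a) 0 = At A - J A a 0"
  using J_iff val_atom atom_compl by blast
lemma J_join: "a \<in> carrier A \<Longrightarrow> b \<in> carrier A \<Longrightarrow> J A (join A a b) 0 = J A a 0 \<union> J A b 0"
  using J_iff val_atom atom_join_iff by blast
lemma J_meet: "a \<in> carrier A \<Longrightarrow> b \<in> carrier A \<Longrightarrow> J A (meet A a b) 0 = J A a 0 \<inter> J A b 0"
  using J_iff val_atom atom_meet_iff by blast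
lemma J_le: "a \<in> carrier A \<Longrightarrow> b \<in> carrier A \<Longrightarrow> J A a 0 \<subseteq> J A b 0 \<Longrightarrow> le A a b"
proof (rule ccontr)
  assume ab: "a \<in> carrier A" "b \<in> carrier A" and s: "J A a 0 \<subseteq> J A b 0" and n: "\<not> le A a b"
  have mc: "meet A a (compl A b) \<in> carrier A" using ab cl1 cl2 by auto
  have "meet A a (compl A b) \<noteq> bot A" using n le_of_meet_compl ab by blast
  then obtain t where t: "atom A t" "le A t (meet A a (compl A b))" using exists_atom mc by blast
  define w where "w = (if t = ident A then None else Some (t, 0::nat))"
  have w: "w \<in> At A" "val w = t" using atom_cases[OF t(1)] unfolding w_def At_def val_def by auto
  have "le A t a" "le A t (compl A b)" using t atom_meet_iff[OF t(1) ab(1) cl1[OF ab(2)]] by auto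
  then have "w \<in> J A a 0" using J_iff w by simp
  then have "le A t b" using s J_iff w by auto
  then show False using \<open>le A t (compl A b)\<close> atom_compl[OF t(1) ab(2)] by simp
qed
lemma J_inj: "inj_on (\<lambda>a. J A a 0) (carrier A)"
  by (rule inj_onI) (metis J_le le_antisym order_refl)

end

theorem lemma2:
  fixes E A :: "'a ra"
  assumes "is_ra A" and "finite (carrier A)" and "symmetric A" and "integral A"
    and "is_ra E" and "finite (carrier E)" and "symmetric E" and "integral E"
    and "subalg E A"
  shows "\<exists>A'. subalg A' (CEA E A) \<and> ra_iso (\<lambda>a. J A a 0) A A'"
proof -
  interpret sra A using assms by unfold_locales
  define f where "f = (\<lambda>a. J A a 0)"
  define A' where "A' = (CEA E A)\<lparr>carrier := f ` carrier A\<rparr>"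
  have fc: "a \<in> carrier A \<Longrightarrow> f a \<in> f ` carrier A" for a by simp
  have cc: "a \<in> carrier A \<Longrightarrow> b \<in> carrier A \<Longrightarrow> join A a b \<in> carrier A \<and> meet A a b \<in> carrier A \<and> comp A a b \<in> carrier A" for a b
    using cl2 by blast
  have sub: "subalg A' (CEA E A)"
    unfolding subalg_def
  proof (intro conjI ballI)
    show "carrier A' \<subseteq> carrier (CEA E A)" using J_sub by (auto simp: A'_def CEA_def f_def)
    show "ra.bot A' \<in> carrier A'" using fc[OF cl_bot] J_bot by (simp add: A'_def CEA_def f_def)
    show "ra.top A' \<in> carrier A'" using fc[OF cl_top] J_top by (simp add: A'_def CEA_def f_def)
    show "ident A' \<in> carrier A'" using fc[OF cl_id] J_id by (simp add: A'_def CEA_def f_def)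
    fix x assume x: "x \<in> carrier A'"
    then obtain a where a: "a \<in> carrier A" "x = f a" by (auto simp: A'_def)
    have "compl A' x = f (compl A a)" using J_compl[OF a(1)] a
      by (simp add: A'_def CEA_def f_def)
    then show "compl A' x \<in> carrier A'" using fc[OF cl1[OF a(1)]] by (simp add: A'_def)
    show "conv A' x \<in> carrier A'" using x by (simp add: A'_def CEA_def)
    fix y assume y: "y \<in> carrier A'"
    then obtain b where b: "b \<in> carrier A" "y = f b" by (auto simp: A'_def)
    have "join A' x y = f (join A a b)" using J_join[OF a(1) b(1)] a b
      by (simp add: A'_def CEA_def f_def)
    then show "join A' x y \<in> carrier A'" using fc cc[OF a(1) b(1)] by (simp add: A'_def)
    have "meet A' x y = f (meet A a b)" using J_meet[OF a(1) b(1)] a b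
      by (simp add: A'_def CEA_def f_def)
    then show "meet A' x y \<in> carrier A'" using fc cc[OF a(1) b(1)] by (simp add: A'_def)
    have "ra.comp A' x y = f (comp A a b)" using J_comp[OF a(1) b(1)] a b
      by (simp add: A'_def CEA_def f_def)
    then show "ra.comp A' x y \<in> carrier A'" using fc cc[OF a(1) b(1)] by (simp add: A'_def)
  qed (simp_all add: A'_def CEA_def)
  have hom: "ra_hom f A A'"
    unfolding ra_hom_def
  proof (intro conjI ballI)
    show "f ` carrier A \<subseteq> carrier A'" by (simp add: A'_def)
    show "f (ra.bot A) = ra.bot A'" using J_bot by (simp add: A'_def CEA_def f_def)
    show "f (ra.top A) = ra.top A'" using J_top by (simp add: A'_def CEA_def f_def)
    show "f (ident A) = ident A'" using J_id by (simp add: A'_def CEA_def f_def)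
    fix x assume x: "x \<in> carrier A"
    show "f (compl A x) = compl A' (f x)" using J_compl[OF x] by (simp add: A'_def CEA_def f_def)
    show "f (conv A x) = conv A' (f x)" using conv_id[OF x] by (simp add: A'_def CEA_def f_def)
    fix y assume y: "y \<in> carrier A"
    show "f (join A x y) = join A' (f x) (f y)" using J_join[OF x y] by (simp add: A'_def CEA_def f_def)
    show "f (meet A x y) = meet A' (f x) (f y)" using J_meet[OF x y] by (simp add: A'_def CEA_def f_def)
    show "f (ra.comp A x y) = ra.comp A' (f x) (f y)" using J_comp[OF x y] by (simp add: A'_def CEA_def f_def)
  qed
  have "bij_betw f (carrier A) (carrier A')"
    unfolding bij_betw_def using J_inj by (simp add: A'_def f_def)
  then show ?thesis using sub hom unfolding ra_iso_def f_def by blast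
qed

end
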